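(* Let $n\ge 2$ and let $k_1,\dots,k_n$, $a_1,\dots,a_{n-1}$, $b_1,\dots,b_n$ be real or complex numbers ($3n-1$ parameters). Let $A_2$ be the $n\times n$ matrix with entries $$(A_2)_{ij}=\begin{cases} k_j b_j, & i\le j,\\ k_i a_j, & i>j.\end{cases}$$ Define $c_i=k_ib_i-k_{i+1}a_i$ for $i=1,\dots,n-1$, $c_0=1$, $c_n=b_n$; $d_i=k_ia_{i+1}b_i-k_{i+1}a_ib_{i+1}$ for $i=1,\dots,n-2$, $d_0=a_1$; $f_i=a_i-b_i$ for $i=2,\dots,n-1$; $g_i=k_i-k_{i+1}$ for $i=2,\dots,n-1$, $g_n=1$. Assume $k_n\neq 0$ and $c_i\neq 0$ for $i=1,\dots,n$. Then $A_2$ is invertible and its inverse $A_2^{-1}=[\alpha_{ij}]$ is the lower Hessenberg matrix with entries $$\alpha_{ij}=\begin{cases} \dfrac{k_{i-1}b_{i-1}-k_{i+1}a_{i-1}}{c_{i-1}c_i}, & i=j,\ i\neq 1,n,\\[2mm] \dfrac{1}{c_1}, & i=j=1,\\[2mm] \dfrac{k_{n-1}b_{n-1}}{k_nc_{n-1}c_n}, & i=j=n,\\[2mm] (-1)^{i+j}\dfrac{d_{j-1}\,g_i\prod_{\nu=j+1}^{i-1}k_\nu f_\nu}{\prod_{\nu=j-1}^{i}c_\nu}, & i-j\ge 1,\\[2mm] -\dfrac{1}{c_i}, & j-i=1,\\[2mm] 0, & j-i>1, \end{cases}$$ where the empty product $\prod_{\nu=j+1}^{i-1}k_\nu f_\nu$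 (case $i=j+1$) is taken to be $1$.
   Context: A lower Hessenberg matrix is a square matrix whose entries $(i,j)$ vanish whenever $j-i>1$. *)

theory Defs
  imports "Jordan_Normal_Form.Matrix"
begin

(* Parameters are 1-indexed functions nat => 'a (k i, a i, b i for i = 1..n);
   matrices are JNF matrices with 0-based indices, so entry (i,j) of the paper
   is the JNF entry (i-1, j-1). *)

definition lower_hessenberg :: "'a::zero mat \<Rightarrow> bool" where
  "lower_hessenberg M \<longleftrightarrow> square_mat M \<and>
     (\<forall>i < dim_row M. \<forall>j < dim_col M. j > i + 1 \<longrightarrow> M $$ (i, j) = 0)"

definition A2 :: "nat \<Rightarrow> (nat \<Rightarrow> 'a::field) \<Rightarrow> (nat \<Rightarrow> 'a) \<Rightarrow> (nat \<Rightarrow> 'a) \<Rightarrow> 'a mat" where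
  "A2 n k a b = mat n n (\<lambda>(i0, j0). let i = i0 + 1; j = j0 + 1 in
       if i \<le> j then k j * b j else k i * a j)"

definition cc :: "nat \<Rightarrow> (nat \<Rightarrow> 'a::field) \<Rightarrow> (nat \<Rightarrow> 'a) \<Rightarrow> (nat \<Rightarrow> 'a) \<Rightarrow> nat \<Rightarrow> 'a" where
  "cc n k a b i = (if i = 0 then 1 else if i = n then b n
                   else k i * b i - k (i + 1) * a i)"

definition dd :: "(nat \<Rightarrow> 'a::field) \<Rightarrow> (nat \<Rightarrow> 'a) \<Rightarrow> (nat \<Rightarrow> 'a) \<Rightarrow> nat \<Rightarrow> 'a" where
  "dd k a b i = (if i = 0 then a 1
                 else k i * a (i + 1) * b i - k (i + 1) * a i * b (i + 1))"

definition ff :: "(nat \<Rightarrow> 'a::field) \<Rightarrow> (nat \<Rightarrow> 'a) \<Rightarrow> nat \<Rightarrow> 'a" where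
  "ff a b i = a i - b i"

definition gg :: "nat \<Rightarrow> (nat \<Rightarrow> 'a::field) \<Rightarrow> nat \<Rightarrow> 'a" where
  "gg n k i = (if i = n then 1 else k i - k (i + 1))"

definition alpha :: "nat \<Rightarrow> (nat \<Rightarrow> 'a::field) \<Rightarrow> (nat \<Rightarrow> 'a) \<Rightarrow> (nat \<Rightarrow> 'a) \<Rightarrow> nat \<Rightarrow> nat \<Rightarrow> 'a" where
  "alpha n k a b i j =
    (let c = cc n k a b in
     if i = j then
       (if i = 1 then 1 / c 1
        else if i = n then k (n - 1) * b (n - 1) / (k n * c (n - 1) * c n)
        else (k (i - 1) * b (i - 1) - k (i + 1) * a (i - 1)) / (c (i - 1) * c i))
     else if i > j then
       (-1) ^ (i + j) * (dd k a b (j - 1) * gg n k i *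
          (\<Prod>\<nu> \<in> {j + 1 .. i - 1}. k \<nu> * ff a b \<nu>))
         / (\<Prod>\<nu> \<in> {j - 1 .. i}. c \<nu>)
     else if j = i + 1 then - (1 / c i)
     else 0)"

definition A2inv :: "nat \<Rightarrow> (nat \<Rightarrow> 'a::field) \<Rightarrow> (nat \<Rightarrow> 'a) \<Rightarrow> (nat \<Rightarrow> 'a) \<Rightarrow> 'a mat" where
  "A2inv n k a b = mat n n (\<lambda>(i0, j0). alpha n k a b (i0 + 1) (j0 + 1))"

end

theory Submission
  imports Defs "Jordan_Normal_Form.Determinant"
begin

definition Ae :: "(nat \<Rightarrow> 'a::field) \<Rightarrow> (nat \<Rightarrow> 'a) \<Rightarrow> (nat \<Rightarrow> 'a) \<Rightarrow> nat \<Rightarrow> nat \<Rightarrow> 'a" where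
  "Ae k a b i l = (if i \<le> l then k l * b l else k i * a l)"

definition hh :: "nat \<Rightarrow> (nat \<Rightarrow> 'a::field) \<Rightarrow> (nat \<Rightarrow> 'a) \<Rightarrow> (nat \<Rightarrow> 'a) \<Rightarrow> nat \<Rightarrow> nat \<Rightarrow> 'a" where
  "hh n k a b j l = (-1)^(l+j) * (\<Prod>\<nu> \<in> {j + 1 .. l - 1}. k \<nu> * ff a b \<nu>)
         / (\<Prod>\<nu> \<in> {j - 1 .. l}. cc n k a b \<nu>)"

lemma tele:
  fixes F :: "nat \<Rightarrow> 'a::ab_group_add"
  shows "p \<le> q \<Longrightarrow> (\<Sum>l\<in>{p..<q}. F l - F (Suc l)) = F p - F q"
proof (induction q rule: dec_induct)
  case base then show ?case by simp
next
  case (step q) then show ?case by simp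
qed

lemma alpha_gt:
  "l > j \<Longrightarrow> alpha n k a b l j = dd k a b (j-1) * gg n k l * hh n k a b j l"
  unfolding alpha_def hh_def Let_def by simp

lemma alpha_low:
  "l + 1 < j \<Longrightarrow> alpha n k a b l j = 0"
  unfolding alpha_def Let_def by simp

lemma alg_mid:
  fixes C1 C2 k0 b0 k1 a0 b1 k2 a1 X Y K R :: "'a::field"
  assumes nz: "C1 \<noteq> 0" "C2 \<noteq> 0" and e: "C1 = k0*b0 - k1*a0" "C2 = k1*b1 - k2*a1"
    and r: "- X * C2 + Y * (k0*b0 - k2*a0) - (k0*a1*b0 - k1*a0*b1) * K = R * (C1 * C2)"
  shows "X * (-(1/C1)) + Y * ((k0*b0 - k2*a0)/(C1*C2)) + (-((k0*a1*b0 - k1*a0*b1) * K)/(C1*C2)) = R"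
proof -
  have "X * (-(1/C1)) + Y * ((k0*b0 - k2*a0)/(C1*C2)) + (-((k0*a1*b0 - k1*a0*b1) * K)/(C1*C2))
     = (- X * C2 + Y * (k0*b0 - k2*a0) - (k0*a1*b0 - k1*a0*b1) * K) / (C1 * C2)"
    using nz by (simp add: field_simps)
  also have "\<dots> = R" using r nz by simp
  finally show ?thesis .
qed

lemma alg_mid_lt:
  fixes C1 C2 k0 b0 k1 a0 b1 k2 a1 :: "'a::field"
  assumes "C1 = k0*b0 - k1*a0" "C2 = k1*b1 - k2*a1"
  shows "- (k0*b0) * C2 + (k1*b1) * (k0*b0 - k2*a0) - (k0*a1*b0 - k1*a0*b1) * k2 = 0 * (C1 * C2)"
  unfolding assms by (simp add: algebra_simps)

lemma alg_mid_eq: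
  fixes C1 C2 k0 b0 k1 a0 b1 k2 a1 :: "'a::field"
  assumes "C1 = k0*b0 - k1*a0" "C2 = k1*b1 - k2*a1"
  shows "- (k1*a0) * C2 + (k1*b1) * (k0*b0 - k2*a0) - (k0*a1*b0 - k1*a0*b1) * k2 = 1 * (C1 * C2)"
  unfolding assms by (simp add: algebra_simps)

lemma alg_mid_gt:
  fixes C1 C2 k0 b0 k1 a0 b1 k2 a1 ki :: "'a::field"
  assumes "C1 = k0*b0 - k1*a0" "C2 = k1*b1 - k2*a1"
  shows "- (ki*a0) * C2 + (ki*a1) * (k0*b0 - k2*a0) - (k0*a1*b0 - k1*a0*b1) * ki = 0 * (C1 * C2)"
  unfolding assms by (simp add: algebra_simps)

locale setting =
  fixes n :: nat and k a b :: "nat \<Rightarrow> 'a :: field"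
  assumes n2: "n \<ge> 2"
    and kn: "k n \<noteq> 0"
    and cnz: "\<forall>i \<in> {1..n}. cc n k a b i \<noteq> 0"
begin

abbreviation "c \<equiv> cc n k a b"
abbreviation "h \<equiv> hh n k a b"

lemma c_nz: "v \<le> n \<Longrightarrow> c v \<noteq> 0"
  using cnz by (cases "v = 0") (auto simp: cc_def)

lemma C_nz: "l \<le> n \<Longrightarrow> (\<Prod>\<nu> \<in> {p .. l}. c \<nu>) \<noteq> 0"
  by (subst prod_zero_iff) (auto simp: c_nz)

lemma h_rec:
  assumes "j \<ge> 1" "j + 1 \<le> l" "l + 1 \<le> n"
  shows "c (l+1) * h j (l+1) = - h j l * k l * ff a b l"
proof -
  have P: "(\<Prod>\<nu> \<in> {j + 1 .. l + 1 - 1}. k \<nu> * ff a b \<nu>)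
     = k l * ff a b l * (\<Prod>\<nu> \<in> {j + 1 .. l - 1}. k \<nu> * ff a b \<nu>)"
  proof -
    have e: "{j + 1 .. l + 1 - 1} = insert l {j + 1 .. l - 1}" using assms by auto
    show ?thesis unfolding e by (subst prod.insert) auto
  qed
  have C: "(\<Prod>\<nu> \<in> {j - 1 .. l+1}. c \<nu>) = c (l+1) * (\<Prod>\<nu> \<in> {j - 1 .. l}. c \<nu>)"
  proof -
    have e: "{j - 1 .. l+1} = insert (l+1) {j - 1 .. l}" using assms by auto
    show ?thesis unfolding e by (subst prod.insert) auto
  qed
  have nz: "c (l+1) \<noteq> 0" "(\<Prod>\<nu> \<in> {j - 1 .. l}. c \<nu>) \<noteq> 0" using assms c_nz C_nz by auto
  show ?thesis unfolding hh_def P C using nz by (simp add: field_simps)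
qed

lemma h_first:
  assumes "j \<ge> 1" "j + 1 \<le> n"
  shows "c (j+1) * h j (j+1) = - 1 / (c (j-1) * c j)"
proof -
  have "{j - 1 .. j+1} = insert (j+1) (insert j {j-1})" using assms by auto
  then have C: "(\<Prod>\<nu> \<in> {j - 1 .. j+1}. c \<nu>) = c (j-1) * c j * c (j+1)" using assms by (simp add: algebra_simps)
  have nz: "c (j+1) \<noteq> 0" "c j \<noteq> 0" "c (j-1) \<noteq> 0" using assms c_nz by auto
  show ?thesis unfolding hh_def C using nz by (simp add: field_simps)
qed


lemma tel1:
  assumes "j \<ge> 1" "j + 1 \<le> i" "i \<le> n"
  shows "(\<Sum>l\<in>{j+1..<i}. a l * gg n k l * h j l) = c (j+1) * h j (j+1) - c i * h j i"
proof -
  have "(\<Sum>l\<in>{j+1..<i}. a l * gg n k l * h j l) = (\<Sum>l\<in>{j+1..<i}. c l * h j l - c (Suc l) * h j (Suc l))"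
  proof (rule sum.cong)
    fix l assume l: "l \<in> {j+1..<i}"
    have r: "c (Suc l) * h j (Suc l) = - h j l * k l * ff a b l" using h_rec[of j l] l assms by simp
    have "l \<noteq> n" "l \<noteq> 0" using l assms by auto
    then have e: "a l * gg n k l = c l + k l * ff a b l" by (simp add: cc_def gg_def ff_def algebra_simps)
    have "a l * gg n k l * h j l = (c l + k l * ff a b l) * h j l" using e by simp
    also have "\<dots> = c l * h j l - (- h j l * k l * ff a b l)" by (simp add: algebra_simps)
    also have "\<dots> = c l * h j l - c (Suc l) * h j (Suc l)" using r by simp
    finally show "a l * gg n k l * h j l = c l * h j l - c (Suc l) * h j (Suc l)" .
  qed simp
  also have "\<dots> = c (j+1) * h j (j+1) - c i * h j i"
    by (rule tele) (use assms in simp)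
  finally show ?thesis .
qed

lemma tel2:
  assumes "j \<ge> 1" "j + 1 \<le> m" "m \<le> n"
  shows "(\<Sum>l\<in>{m..n}. k l * b l * gg n k l * h j l) = k m * c m * h j m"
proof -
  have "(\<Sum>l\<in>{m..<n}. k l * b l * gg n k l * h j l) = (\<Sum>l\<in>{m..<n}. k l * c l * h j l - k (Suc l) * c (Suc l) * h j (Suc l))"
  proof (rule sum.cong)
    fix l assume l: "l \<in> {m..<n}"
    have r: "c (Suc l) * h j (Suc l) = - h j l * k l * ff a b l" using h_rec[of j l] l assms by simp
    have "l \<noteq> n" "l \<noteq> 0" using l assms by auto
    then have e: "b l * gg n k l = c l + k (Suc l) * ff a b l" by (simp add: cc_def gg_def ff_def algebra_simps)
    have "k l * b l * gg n k l * h j l = k l * (c l + k (Suc l) * ff a b l) * h j l" using e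
      by (simp add: mult.assoc)
    also have "\<dots> = k l * c l * h j l - k (Suc l) * (- h j l * k l * ff a b l)" by (simp add: algebra_simps)
    also have "\<dots> = k l * c l * h j l - k (Suc l) * (c (Suc l) * h j (Suc l))" using r by simp
    finally show "k l * b l * gg n k l * h j l = k l * c l * h j l - k (Suc l) * c (Suc l) * h j (Suc l)"
      by (simp add: mult.assoc)
  qed simp
  also have "\<dots> = k m * c m * h j m - k n * c n * h j n"
    by (rule tele) (use assms in simp)
  finally have s: "(\<Sum>l\<in>{m..<n}. k l * b l * gg n k l * h j l) = k m * c m * h j m - k n * c n * h j n" .
  have e: "{m..n} = insert n {m..<n}" using assms by auto
  have "(\<Sum>l\<in>{m..n}. k l * b l * gg n k l * h j l) = k n * b n * gg n k n * h j n + (\<Sum>l\<in>{m..<n}. k l * b l * gg n k l * h j l)"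
    unfolding e by (subst sum.insert) auto
  also have "k n * b n * gg n k n * h j n = k n * c n * h j n" using n2 by (simp add: gg_def cc_def)
  finally show ?thesis using s by simp
qed

lemma head_sum:
  assumes "1 \<le> j" "j \<le> n"
  shows "(\<Sum>l\<in>{1..j}. Ae k a b i l * alpha n k a b l j)
    = (if j \<ge> 2 then Ae k a b i (j-1) * (- (1 / c (j-1))) else 0) + Ae k a b i j * alpha n k a b j j"
proof (cases "j = 1")
  case True then show ?thesis by simp
next
  case False
  then have e: "{1..j} = insert j (insert (j-1) {1..<j-1})" using assms by auto
  have n1: "j \<notin> insert (j-1) {1..<j-1}" using False assms by auto
  have n2': "j-1 \<notin> {1..<j-1}" by auto
  have z: "(\<Sum>l\<in>{1..<j-1}. Ae k a b i l * alpha n k a b l j) = 0"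
    by (rule sum.neutral) (auto simp: alpha_low)
  have al: "alpha n k a b (j-1) j = - (1 / c (j-1))" using False assms
    unfolding alpha_def Let_def by auto
  have "(\<Sum>l\<in>{1..j}. Ae k a b i l * alpha n k a b l j)
     = Ae k a b i j * alpha n k a b j j + (Ae k a b i (j-1) * alpha n k a b (j-1) j
        + (\<Sum>l\<in>{1..<j-1}. Ae k a b i l * alpha n k a b l j))"
    unfolding e sum.insert[OF finite_insert[THEN iffD2, OF finite_atLeastLessThan] n1]
      sum.insert[OF finite_atLeastLessThan n2'] by simp
  then show ?thesis using z al False assms by simp
qed

lemma tail_sum:
  assumes "1 \<le> j" "j < n" "1 \<le> i" "i \<le> n"
  shows "(\<Sum>l\<in>{j+1..n}. Ae k a b i l * alpha n k a b l j)
    = - (dd k a b (j-1) * (if i > j then k i else k (j+1))) / (c (j-1) * c j)"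
proof -
  have "(\<Sum>l\<in>{j+1..n}. Ae k a b i l * alpha n k a b l j)
      = dd k a b (j-1) * (\<Sum>l\<in>{j+1..n}. Ae k a b i l * gg n k l * h j l)"
    unfolding sum_distrib_left by (rule sum.cong) (auto simp: alpha_gt)
  also have "(\<Sum>l\<in>{j+1..n}. Ae k a b i l * gg n k l * h j l)
      = (if i > j then k i else k (j+1)) * (c (j+1) * h j (j+1))"
  proof (cases "i \<le> j + 1")
    case True
    have "(\<Sum>l\<in>{j+1..n}. Ae k a b i l * gg n k l * h j l) = (\<Sum>l\<in>{j+1..n}. k l * b l * gg n k l * h j l)"
      by (rule sum.cong) (use True in \<open>auto simp: Ae_def\<close>)
    also have "\<dots> = k (j+1) * c (j+1) * h j (j+1)" using tel2[of j "j+1"] assms by simp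
    finally show ?thesis using True by (cases "i = j+1") (auto simp: mult.assoc)
  next
    case False
    have e: "{j+1..n} = {j+1..<i} \<union> {i..n}" using False assms by auto
    have "(\<Sum>l\<in>{j+1..n}. Ae k a b i l * gg n k l * h j l)
       = (\<Sum>l\<in>{j+1..<i}. Ae k a b i l * gg n k l * h j l) + (\<Sum>l\<in>{i..n}. Ae k a b i l * gg n k l * h j l)"
      unfolding e by (rule sum.union_disjoint) auto
    also have "(\<Sum>l\<in>{j+1..<i}. Ae k a b i l * gg n k l * h j l) = k i * (\<Sum>l\<in>{j+1..<i}. a l * gg n k l * h j l)"
      unfolding sum_distrib_left by (rule sum.cong) (auto simp: Ae_def mult.assoc)
    also have "(\<Sum>l\<in>{i..n}. Ae k a b i l * gg n k l * h j l) = (\<Sum>l\<in>{i..n}. k l * b l * gg n k l * h j l)"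
      by (rule sum.cong) (auto simp: Ae_def)
    also have "\<dots> = k i * c i * h j i" using tel2[of j i] assms False by simp
    also have "(\<Sum>l\<in>{j+1..<i}. a l * gg n k l * h j l) = c (j+1) * h j (j+1) - c i * h j i"
      using tel1[of j i] assms False by simp
    finally show ?thesis using False by (simp add: algebra_simps)
  qed
  also have "c (j+1) * h j (j+1) = - 1 / (c (j-1) * c j)" using h_first[of j] assms by simp
  finally show ?thesis by simp
qed

lemma main_sum:
  assumes i: "1 \<le> i" "i \<le> n" and j: "1 \<le> j" "j \<le> n"
  shows "(\<Sum>l\<in>{1..n}. Ae k a b i l * alpha n k a b l j) = (if i = j then 1 else 0)"
proof -
  have e: "{1..n} = {1..j} \<union> {j+1..n}" using j by auto
  have "(\<Sum>l\<in>{1..n}. Ae k a b i l * alpha n k a b l j)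
      = (\<Sum>l\<in>{1..j}. Ae k a b i l * alpha n k a b l j) + (\<Sum>l\<in>{j+1..n}. Ae k a b i l * alpha n k a b l j)"
    unfolding e by (rule sum.union_disjoint) auto
  also have "(\<Sum>l\<in>{1..j}. Ae k a b i l * alpha n k a b l j)
    = (if j \<ge> 2 then Ae k a b i (j-1) * (- (1 / c (j-1))) else 0) + Ae k a b i j * alpha n k a b j j"
    using head_sum j by blast
  also have "(\<Sum>l\<in>{j+1..n}. Ae k a b i l * alpha n k a b l j)
     = (if j < n then - (dd k a b (j-1) * (if i > j then k i else k (j+1))) / (c (j-1) * c j) else 0)"
    using tail_sum[of j i] i j by auto
  finally have S: "(\<Sum>l\<in>{1..n}. Ae k a b i l * alpha n k a b l j) = 
      (if j \<ge> 2 then Ae k a b i (j-1) * (- (1 / c (j-1))) else 0) + Ae k a b i j * alpha n k a b j j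
      + (if j < n then - (dd k a b (j-1) * (if i > j then k i else k (j+1))) / (c (j-1) * c j) else 0)" .
  have nzj: "c j \<noteq> 0" "c (j-1) \<noteq> 0" using c_nz j by auto
  consider "j = 1" | "j = n" | "1 < j" "j < n" using j n2 by linarith
  then show ?thesis
  proof cases
    case 1
    have c1: "c (Suc 0) = k (Suc 0) * b (Suc 0) - k (Suc (Suc 0)) * a (Suc 0)" using n2 by (simp add: cc_def)
    have al: "alpha n k a b 1 1 = 1 / c 1" by (simp add: alpha_def Let_def)
    have d: "dd k a b 0 = a 1" by (simp add: dd_def)
    have c0: "c 0 = 1" by (simp add: cc_def)
    have nz: "c 1 \<noteq> 0" using nzj 1 by simp
    show ?thesis
    proof (cases "i = 1")
      case True
      show ?thesis unfolding S using 1 True n2 al d c0 nz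
        by (simp add: Ae_def field_simps) (simp add: c1)
    next
      case False
      show ?thesis unfolding S using 1 False n2 al d c0 nz i
        by (simp add: Ae_def field_simps numeral_2_eq_2)
    qed
  next
    case 2
    have cn: "c n = b n" using n2 by (simp add: cc_def)
    have cn1: "c (n - Suc 0) = k (n - Suc 0) * b (n - Suc 0) - k n * a (n - Suc 0)" using n2 by (auto simp: cc_def)
    have al: "alpha n k a b n n = k (n - 1) * b (n - 1) / (k n * c (n - 1) * c n)"
      using n2 by (simp add: alpha_def Let_def)
    have nz: "c n \<noteq> 0" "c (n-1) \<noteq> 0" using nzj 2 by auto
    show ?thesis
    proof (cases "i = n")
      case True
      have "Ae k a b i (j-1) = k n * a (n-1)" "Ae k a b i j = k n * b n" using True 2 n2 by (auto simp: Ae_def)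
      then show ?thesis unfolding S using 2 True n2 al nz kn
        by (simp add: field_simps cn) (simp add: cn1)
    next
      case False
      have "Ae k a b i (j-1) = k (n-1) * b (n-1)" "Ae k a b i j = k n * b n" using False 2 i n2 by (auto simp: Ae_def)
      then show ?thesis unfolding S using 2 False n2 al nz kn
        by (simp add: field_simps cn)
    qed
  next
    case 3
    have c1: "c (j-1) = k (j-1) * b (j-1) - k j * a (j-1)" using 3 by (auto simp: cc_def)
    have c2: "c j = k j * b j - k (j+1) * a j" using 3 by (auto simp: cc_def)
    have d: "dd k a b (j-1) = k (j-1) * a j * b (j-1) - k j * a (j-1) * b j" using 3 by (auto simp: dd_def)
    have al: "alpha n k a b j j = (k (j-1) * b (j-1) - k (j+1) * a (j-1)) / (c (j-1) * c j)"
      using 3 by (simp add: alpha_def Let_def)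
    have E: "(\<Sum>l\<in>{1..n}. Ae k a b i l * alpha n k a b l j) =
       Ae k a b i (j-1) * (-(1/c (j-1))) + Ae k a b i j * ((k (j-1) * b (j-1) - k (j+1) * a (j-1))/(c (j-1) * c j))
       + (-((k (j-1) * a j * b (j-1) - k j * a (j-1) * b j) * (if i > j then k i else k (j+1)))/(c (j-1) * c j))"
      unfolding S al d using 3 by simp
    consider "i < j" | "i = j" | "i > j" by linarith
    then show ?thesis
    proof cases
      case 1
      have "Ae k a b i (j-1) = k (j-1) * b (j-1)" "Ae k a b i j = k j * b j" using 1 by (auto simp: Ae_def)
      then show ?thesis unfolding E using 1
        using alg_mid[OF nzj(2) nzj(1) c1 c2 alg_mid_lt[OF c1 c2]] by simp
    next
      case 2
      have "Ae k a b i (j-1) = k j * a (j-1)" "Ae k a b i j = k j * b j" using 2 3 by (auto simp: Ae_def)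
      then show ?thesis unfolding E using 2
        using alg_mid[OF nzj(2) nzj(1) c1 c2 alg_mid_eq[OF c1 c2]] by simp
    next
      case 4: 3
      have "Ae k a b i (j-1) = k i * a (j-1)" "Ae k a b i j = k i * a j" using 4 3 by (auto simp: Ae_def)
      then show ?thesis unfolding E using 4
        using alg_mid[OF nzj(2) nzj(1) c1 c2 alg_mid_gt[OF c1 c2]] by simp
    qed
  qed
qed

end

lemma sum_shift1: "(\<Sum>l\<in>{1..n}. f l) = (\<Sum>l0\<in>{0..<n}. f (Suc l0))"
  by (rule sum.reindex_bij_witness[of _ Suc "\<lambda>l. l - 1"]) auto

theorem mainTheorem3:
  fixes n :: nat and k a b :: "nat \<Rightarrow> 'a :: real_normed_field"
  assumes "n \<ge> 2"
    and "k n \<noteq> 0"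
    and "\<forall>i \<in> {1..n}. cc n k a b i \<noteq> 0"
  shows "invertible_mat (A2 n k a b)
       \<and> inverts_mat (A2 n k a b) (A2inv n k a b)
       \<and> inverts_mat (A2inv n k a b) (A2 n k a b)
       \<and> lower_hessenberg (A2inv n k a b)"
proof -
  interpret setting n k a b using assms by unfold_locales auto
  have cA: "A2 n k a b \<in> carrier_mat n n" by (simp add: A2_def)
  have cB: "A2inv n k a b \<in> carrier_mat n n" by (simp add: A2inv_def)
  have AB: "A2 n k a b * A2inv n k a b = 1\<^sub>m n"
  proof (rule eq_matI)
    fix i0 j0 assume "i0 < dim_row (1\<^sub>m n :: 'a mat)" "j0 < dim_col (1\<^sub>m n :: 'a mat)"
    then have ij: "i0 < n" "j0 < n" by auto
    have "(A2 n k a b * A2inv n k a b) $$ (i0, j0)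
        = (\<Sum>l0\<in>{0..<n}. Ae k a b (Suc i0) (Suc l0) * alpha n k a b (Suc l0) (Suc j0))"
      using ij by (simp add: A2_def A2inv_def scalar_prod_def Ae_def Let_def)
    also have "\<dots> = (\<Sum>l\<in>{1..n}. Ae k a b (Suc i0) l * alpha n k a b l (Suc j0))"
      by (rule sum_shift1[symmetric])
    also have "\<dots> = (if Suc i0 = Suc j0 then 1 else 0)"
      by (rule main_sum) (use ij in auto)
    finally show "(A2 n k a b * A2inv n k a b) $$ (i0, j0) = 1\<^sub>m n $$ (i0, j0)"
      using ij by simp
  qed (auto simp: A2_def A2inv_def)
  have BA: "A2inv n k a b * A2 n k a b = 1\<^sub>m n"
    by (rule mat_mult_left_right_inverse[OF cA cB AB])
  have i1: "inverts_mat (A2 n k a b) (A2inv n k a b)" using AB cA by (simp add: inverts_mat_def)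
  have i2: "inverts_mat (A2inv n k a b) (A2 n k a b)" using BA cB by (simp add: inverts_mat_def)
  have inv: "invertible_mat (A2 n k a b)" using i1 i2 cA unfolding invertible_mat_def by auto
  have lh: "lower_hessenberg (A2inv n k a b)"
    unfolding lower_hessenberg_def using cB by (auto simp: A2inv_def alpha_low)
  show ?thesis using inv i1 i2 lh by blast
qed

end
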